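(* Let $\mathcal{X}\subseteq\mathcal{B}(0,R)$ be compact convex, $\mathcal{Z}$ a set and $f:\mathcal{X}\times\mathcal{Z}\to\mathbb{R}$ with $f(\cdot,z)\in\mathcal{F}^0_{\mathcal{X}}(L)$ for all $z$. Let $\pi$ be any permutation of $[n]$, $K\ge1$, $T=nK$, and let $(\eta_t)_{t\in[T]}$ be a non-increasing sequence of positive step sizes. Fixed-permutation SGD $\mathcal{A}_{\sf PerSGD}$ on $S=(z_1,\dots,z_n)$: start from a fixed initial point $x^0_{n+1}\in\mathcal{X}$; for $k=1,\dots,K$ set $x^k_1=x^{k-1}_{n+1}$ and for $t=1,\dots,n$ set $x^k_{t+1}=\mathsf{Proj}_{\mathcal{X}}(x^k_t-\eta_{(k-1)n+t}\nabla f(x^k_t,z_{\pi(t)}))$, and let $\bar\eta_k=\sum_{t=1}^n\eta_{(k-1)n+t}$; output $\bar x^K=\frac{1}{\sum_{k\in[K]}\bar\eta_k}\sum_{k\in[K]}\bar\eta_k x^k_1$. Then, with the same $\pi$ and initial point used for both datasets, $$\sup_{S\simeq S'}\|\mathcal{A}_{\sf PerSGD}(S)-\mathcal{A}_{\sf PerSGD}(S')\|\le\min\Big\{2R,\;2L\Big(\sqrt{\sum_{t=1}^{T-1}\eta_t^2}+\frac2n\sum_{t=1}^{T-1}\eta_t\Big)\Big\}.$$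
   Context: $\|\cdot\|$ is the Euclidean norm, $\mathcal{B}(0,R)$ the Euclidean ball of radius $R$, $\mathsf{Proj}_{\mathcal{X}}$ the Euclidean projection. $\mathcal{F}^0_{\mathcal{X}}(L)$ is the class of convex $L$-Lipschitz functions on $\mathcal{X}$ (Lipschitz on an open set containing $\mathcal{X}$, so subgradients have norm at most $L$). $\nabla f(x,z)$ is a fixed arbitrary selection of a subgradient of $f(\cdot,z)$ at $x$. Datasets $S,S'\in\mathcal{Z}^n$ are neighboring, $S\simeq S'$, if they differ in at most one entry. *)

theory Defs
  imports "HOL-Analysis.Analysis"
begin

definition proj_set :: "'a::euclidean_space set \<Rightarrow> 'a \<Rightarrow> 'a" where
  "proj_set X y = closest_point X y"

text \<open>Global step j+1 corresponds to epoch k = j div n + 1 and inner step t = j mod n + 1,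
  with step size index (k-1)n + t = j+1. Hence x^k_t = persgd_seq ... ((k-1)*n + t - 1);
  in particular x^k_1 = persgd_seq ... ((k-1)*n).\<close>
primrec persgd_seq ::
  "'a::euclidean_space set \<Rightarrow> ('a \<Rightarrow> 'z \<Rightarrow> 'a) \<Rightarrow> (nat \<Rightarrow> real) \<Rightarrow> nat \<Rightarrow> (nat \<Rightarrow> nat)
    \<Rightarrow> (nat \<Rightarrow> 'z) \<Rightarrow> 'a \<Rightarrow> nat \<Rightarrow> 'a" where
  "persgd_seq X g \<eta> n \<pi> S x0 0 = x0"
| "persgd_seq X g \<eta> n \<pi> S x0 (Suc j) =
     (let x = persgd_seq X g \<eta> n \<pi> S x0 j
      in proj_set X (x - \<eta> (Suc j) *\<^sub>R g x (S (\<pi> (j mod n + 1)))))"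

definition epoch_step :: "(nat \<Rightarrow> real) \<Rightarrow> nat \<Rightarrow> nat \<Rightarrow> real" where
  "epoch_step \<eta> n k = (\<Sum>t=1..n. \<eta> ((k - 1) * n + t))"

definition persgd ::
  "'a::euclidean_space set \<Rightarrow> ('a \<Rightarrow> 'z \<Rightarrow> 'a) \<Rightarrow> (nat \<Rightarrow> real) \<Rightarrow> nat \<Rightarrow> nat \<Rightarrow> (nat \<Rightarrow> nat)
    \<Rightarrow> 'a \<Rightarrow> (nat \<Rightarrow> 'z) \<Rightarrow> 'a" where
  "persgd X g \<eta> n K \<pi> x0 S =
     (1 / (\<Sum>k=1..K. epoch_step \<eta> n k)) *\<^sub>R
       (\<Sum>k=1..K. epoch_step \<eta> n k *\<^sub>R persgd_seq X g \<eta> n \<pi> S x0 ((k - 1) * n))"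

definition neighboring :: "nat \<Rightarrow> (nat \<Rightarrow> 'z) \<Rightarrow> (nat \<Rightarrow> 'z) \<Rightarrow> bool" where
  "neighboring n S S' \<longleftrightarrow> card {i \<in> {1..n}. S i \<noteq> S' i} \<le> 1"

end

theory Submission
  imports Defs
begin


definition lidx :: "nat \<Rightarrow> nat \<Rightarrow> nat \<Rightarrow> nat" where
  "lidx n q j = (if j \<le> q then 0 else ((j - q - 1) div n) * n + q + 1)"

lemma lidx_le: "n \<ge> 1 \<Longrightarrow> lidx n q j \<le> j"
proof -
  have "(j - q - 1) div n * n \<le> j - q - 1" by (metis div_mult_mod_eq le_add1)
  show ?thesis
  proof (cases "j \<le> q")
    case True then show ?thesis by (simp add: lidx_def)
  next
    case False
    then have "lidx n q j = (j - q - 1) div n * n + q + 1" by (simp add: lidx_def)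
    with \<open>(j - q - 1) div n * n \<le> j - q - 1\<close> False show ?thesis by linarith
  qed
qed

lemma aux_div: "(s::nat) < n \<Longrightarrow> (s + d * n) div n = d"
  by simp

lemma lidx_mono: "lidx n q j \<le> lidx n q (Suc j)"
  unfolding lidx_def by (auto intro!: mult_right_mono div_le_mono)

lemma lidx_good: "j mod n \<noteq> q \<Longrightarrow> n \<ge> 1 \<Longrightarrow> q < n \<Longrightarrow> lidx n q (Suc j) = lidx n q j"
proof -
  assume a: "j mod n \<noteq> q" "n \<ge> 1" "q < n"
  consider "j < q" | "j = q" | "q < j" by linarith
  then show ?thesis
  proof cases
    case 1 then show ?thesis unfolding lidx_def by auto
  next
    case 2 then show ?thesis using a by auto
  next
    case 3
    define r where "r = j - q"
    have r: "j = q + r" "r \<ge> 1" using 3 r_def by auto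
    have rm: "r mod n \<noteq> 0"
    proof
      assume "r mod n = 0"
      then have "j mod n = q mod n" using r by (simp add: mod_add_right_eq[symmetric])
      then show False using a by simp
    qed
    define d s where "d = r div n" and "s = r mod n"
    have rd: "r = d * n + s" "s \<ge> 1" "s < n" using rm a d_def s_def by auto
    have e1: "r div n = d" using d_def by simp
    have "r - 1 = (s - 1) + d * n" using rd by simp
    then have e2: "(r - 1) div n = d" using rd a aux_div[of "s - 1" n d] by simp
    show ?thesis using 3 e1 e2 r unfolding lidx_def by auto
  qed
qed

lemma lidx_bad: "j mod n = q \<Longrightarrow> q < j \<Longrightarrow> n \<ge> 1 \<Longrightarrow> lidx n q (Suc j) = Suc j \<and> lidx n q j + n = Suc j"
proof -
  assume a: "j mod n = q" "q < j" "n \<ge> 1"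
  define m where "m = j div n"
  have j: "j = m * n + q" using a m_def by (metis div_mult_mod_eq)
  have m: "m \<ge> 1" using a j by (cases m) auto
  then obtain m' where m': "m = Suc m'" by (cases m) auto
  have j2: "j = q + n + m' * n" using j m' by simp
  have e1: "(Suc j - q - 1) div n = Suc m'" using j2 a by simp
  have "j - q - 1 = (n - 1) + m' * n" using j2 a by simp
  then have e2: "(j - q - 1) div n = m'" using a aux_div[of "n - 1" n m'] by simp
  show ?thesis using e1 e2 a j2 unfolding lidx_def by (auto simp: algebra_simps)
qed

lemma sq_step:
  fixes d d' C u v w x :: real
  assumes "d' \<ge> 0" "C \<ge> 0" "w \<ge> 0" "0 \<le> u" "u \<le> v" "d \<ge> 0"
    "d \<le> C * u + w" "d'^2 \<le> d^2 + x" "C^2 * u^2 + x \<le> C^2 * v^2"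
  shows "d' \<le> C * v + w"
proof -
  have "d^2 \<le> (C * u + w)^2" using assms by (intro power_mono) auto
  then have "d'^2 \<le> (C*u+w)^2 + x" using assms by linarith
  also have "\<dots> = C^2*u^2 + x + 2*C*u*w + w^2" by (simp add: power2_eq_square algebra_simps)
  also have "\<dots> \<le> C^2 * v^2 + 2 * C * v * w + w^2"
  proof -
    have "2 * C * u * w \<le> 2 * C * v * w" using assms by (intro mult_right_mono mult_left_mono) auto
    then show ?thesis using assms(9) by linarith
  qed
  also have "\<dots> = (C * v + w)^2" by (simp add: power2_eq_square algebra_simps)
  finally have fin: "d'^2 \<le> (C * v + w)^2" .
  have "0 \<le> C * v + w" using assms by (intro add_nonneg_nonneg mult_nonneg_nonneg) auto
  then show ?thesis by (rule power2_le_imp_le[OF fin])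
qed

lemma stab_abs:
  fixes d a :: "nat \<Rightarrow> real" and C :: real and n q N :: nat
  assumes n1: "n \<ge> 1" and qn: "q < n" and C0: "C \<ge> 0" and d0: "d 0 = 0"
    and dnn: "\<And>j. d j \<ge> 0"
    and apos: "\<And>t. 1 \<le> t \<Longrightarrow> t \<le> N \<Longrightarrow> a t \<ge> 0"
    and amono: "\<And>s t. 1 \<le> s \<Longrightarrow> s \<le> t \<Longrightarrow> t \<le> N \<Longrightarrow> a t \<le> a s"
    and same: "\<And>j. j < N \<Longrightarrow> j mod n \<noteq> q \<Longrightarrow> d j = 0 \<Longrightarrow> d (Suc j) = 0"
    and good: "\<And>j. j < N \<Longrightarrow> j mod n \<noteq> q \<Longrightarrow> (d (Suc j))^2 \<le> (d j)^2 + (C * a (Suc j))^2"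
    and zero: "\<And>j. j < N \<Longrightarrow> d j = 0 \<Longrightarrow> (d (Suc j))^2 \<le> (C * a (Suc j))^2"
    and bad: "\<And>j. j < N \<Longrightarrow> d (Suc j) \<le> d j + C * a (Suc j)"
  shows "j \<le> N \<Longrightarrow> (j \<le> q \<longrightarrow> d j = 0) \<and>
      d j \<le> C * sqrt (\<Sum>t=1..j. (a t)^2) + C / n * (\<Sum>t=1..lidx n q j. a t)"
proof (induction j)
  case 0
  then show ?case using d0 by (simp add: lidx_def)
next
  case (Suc j)
  then have jN: "j < N" by simp
  from Suc have IH: "j \<le> q \<longrightarrow> d j = 0"
     "d j \<le> C * sqrt (\<Sum>t=1..j. (a t)^2) + C / n * (\<Sum>t=1..lidx n q j. a t)" by auto
  define A where "A = (\<Sum>t=1..j. (a t)^2)"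
  define E where "E = (\<Sum>t=1..lidx n q j. a t)"
  define E' where "E' = (\<Sum>t=1..lidx n q (Suc j). a t)"
  have A': "(\<Sum>t=1..Suc j. (a t)^2) = A + (a (Suc j))^2" unfolding A_def by simp
  have A0: "A \<ge> 0" unfolding A_def by (intro sum_nonneg) auto
  have lj: "lidx n q j \<le> j" "lidx n q (Suc j) \<le> Suc j" using lidx_le n1 by auto
  have E0: "E \<ge> 0" unfolding E_def using lj jN by (intro sum_nonneg apos) auto
  have EE': "E \<le> E'" unfolding E_def E'_def using lj jN lidx_mono[of n q j]
    by (intro sum_mono2 apos) auto
  have w0: "C / n * E \<ge> 0" using C0 E0 by simp
  have w1: "C / n * E \<le> C / n * E'" using C0 EE' by (intro mult_left_mono) auto
  have first: "Suc j \<le> q \<longrightarrow> d (Suc j) = 0"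
  proof
    assume "Suc j \<le> q"
    then have "j mod n = j" "j \<noteq> q" using qn by auto
    then show "d (Suc j) = 0" using same[OF jN] IH \<open>Suc j \<le> q\<close> by auto
  qed
  have second: "d (Suc j) \<le> C * sqrt (A + (a (Suc j))^2) + C / n * E'"
  proof (cases "j mod n = q")
    case False
    then have "E' = E" unfolding E_def E'_def using lidx_good n1 qn by simp
    moreover have "d (Suc j) \<le> C * sqrt (A + (a (Suc j))^2) + C / n * E"
      apply (rule sq_step[OF dnn C0 w0 _ _ dnn IH(2)[folded A_def E_def] good[OF jN False]])
      using A0 by (auto simp: power_mult_distrib algebra_simps)
    ultimately show ?thesis by simp
  next
    case True
    show ?thesis
    proof (cases "j \<le> q")
      case True
      then have "d j = 0" using IH by simp
      then have c1: "(d (Suc j))^2 \<le> (C * a (Suc j))^2" using zero jN by simp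
      have c2: "(C * a (Suc j))^2 \<le> (C * sqrt (A + (a (Suc j))^2))^2"
      proof -
        have "C^2 * (a (Suc j))^2 \<le> C^2 * (A + (a (Suc j))^2)"
          by (rule mult_left_mono) (use A0 in auto)
        moreover have "(C * sqrt (A + (a (Suc j))^2))^2 = C^2 * (A + (a (Suc j))^2)"
          using A0 by (simp add: power_mult_distrib)
        moreover have "(C * a (Suc j))^2 = C^2 * (a (Suc j))^2" by (rule power_mult_distrib)
        ultimately show ?thesis by linarith
      qed
      have nn: "0 \<le> C * sqrt (A + (a (Suc j))^2)" using C0 A0 by simp
      have "d (Suc j) \<le> C * sqrt (A + (a (Suc j))^2)"
        by (rule power2_le_imp_le[OF order_trans[OF c1 c2] nn])
      then show ?thesis using w0 w1 by linarith
    next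
      case False
      then have lb: "lidx n q (Suc j) = Suc j" "lidx n q j + n = Suc j"
        using lidx_bad[OF True _ n1] by auto
      have "E' = sum a {1..lidx n q j + n}" unfolding E'_def lb(1) using lb(2) by simp
      also have "\<dots> = E + (\<Sum>t=lidx n q j + 1..lidx n q j + n. a t)"
        unfolding E_def by (rule sum.ub_add_nat) simp
      finally have "E' = E + (\<Sum>t=lidx n q j + 1..lidx n q j + n. a t)" .
      moreover have "(\<Sum>t=lidx n q j + 1..lidx n q j + n. a t) \<ge> (\<Sum>t=lidx n q j + 1..lidx n q j + n. a (Suc j))"
        using lb jN by (intro sum_mono amono) auto
      ultimately have "E' \<ge> E + n * a (Suc j)" by simp
      then have "C / n * (E + n * a (Suc j)) \<le> C / n * E'"
        by (rule mult_left_mono) (use C0 in simp)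
      moreover have "C / n * (E + n * a (Suc j)) = C / n * E + C * a (Suc j)"
        using n1 by (simp add: field_simps)
      ultimately have "C / n * E' \<ge> C / n * E + C * a (Suc j)" by linarith
      moreover have "sqrt A \<le> sqrt (A + (a (Suc j))^2)" by (rule real_sqrt_le_mono) simp
      then have "C * sqrt A \<le> C * sqrt (A + (a (Suc j))^2)" using C0 by (rule mult_left_mono)
      ultimately show ?thesis using bad[OF jN] IH(2)[folded A_def E_def] by linarith
    qed
  qed
  show ?case using first second A' E'_def by simp
qed


lemma avg_bound:
  fixes u v :: "nat \<Rightarrow> 'a::real_normed_vector" and w :: "nat \<Rightarrow> real"
  assumes fin: "finite I" and ne: "I \<noteq> {}" and wpos: "\<And>k. k \<in> I \<Longrightarrow> w k > 0"
    and bd: "\<And>k. k \<in> I \<Longrightarrow> norm (u k - v k) \<le> M"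
  shows "norm ((1 / sum w I) *\<^sub>R (\<Sum>k\<in>I. w k *\<^sub>R u k) - (1 / sum w I) *\<^sub>R (\<Sum>k\<in>I. w k *\<^sub>R v k)) \<le> M"
proof -
  have W: "sum w I > 0" using fin ne wpos by (intro sum_pos) auto
  have "(1 / sum w I) *\<^sub>R (\<Sum>k\<in>I. w k *\<^sub>R u k) - (1 / sum w I) *\<^sub>R (\<Sum>k\<in>I. w k *\<^sub>R v k)
      = (1 / sum w I) *\<^sub>R (\<Sum>k\<in>I. w k *\<^sub>R (u k - v k))"
    by (simp add: scaleR_diff_right sum_subtractf)
  then have "norm ((1 / sum w I) *\<^sub>R (\<Sum>k\<in>I. w k *\<^sub>R u k) - (1 / sum w I) *\<^sub>R (\<Sum>k\<in>I. w k *\<^sub>R v k))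
      = (1 / sum w I) * norm (\<Sum>k\<in>I. w k *\<^sub>R (u k - v k))" using W by simp
  also have "\<dots> \<le> (1 / sum w I) * (\<Sum>k\<in>I. w k * M)"
  proof (rule mult_left_mono)
    have "norm (\<Sum>k\<in>I. w k *\<^sub>R (u k - v k)) \<le> (\<Sum>k\<in>I. norm (w k *\<^sub>R (u k - v k)))"
      by (rule norm_sum)
    also have "\<dots> \<le> (\<Sum>k\<in>I. w k * M)"
    proof (rule sum_mono)
      fix k assume k: "k \<in> I"
      have "norm (w k *\<^sub>R (u k - v k)) = w k * norm (u k - v k)" using wpos[OF k] by simp
      also have "\<dots> \<le> w k * M" using wpos[OF k] bd[OF k] by (intro mult_left_mono) auto
      finally show "norm (w k *\<^sub>R (u k - v k)) \<le> w k * M" .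
    qed
    finally show "norm (\<Sum>k\<in>I. w k *\<^sub>R (u k - v k)) \<le> (\<Sum>k\<in>I. w k * M)" .
  qed (use W in simp)
  also have "\<dots> = M" using W by (simp add: sum_distrib_right[symmetric])
  finally show ?thesis .
qed

lemma proj_step_bad:
  fixes u v gu gv :: "'a::euclidean_space"
  assumes "convex X" "closed X" "X \<noteq> {}" "norm gu \<le> L" "norm gv \<le> L" "e \<ge> 0"
  shows "norm (proj_set X (u - e *\<^sub>R gu) - proj_set X (v - e *\<^sub>R gv)) \<le> norm (u - v) + 2 * L * e"
proof -
  have "norm (proj_set X (u - e *\<^sub>R gu) - proj_set X (v - e *\<^sub>R gv)) \<le> norm ((u - e *\<^sub>R gu) - (v - e *\<^sub>R gv))"
    using closest_point_lipschitz[OF assms(1-3)] unfolding proj_set_def dist_norm by blast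
  also have "(u - e *\<^sub>R gu) - (v - e *\<^sub>R gv) = (u - v) - e *\<^sub>R (gu - gv)" by (simp add: algebra_simps)
  also have "norm \<dots> \<le> norm (u - v) + norm (e *\<^sub>R (gu - gv))" by (rule norm_triangle_ineq4)
  also have "norm (e *\<^sub>R (gu - gv)) = e * norm (gu - gv)" using assms(6) by simp
  also have "e * norm (gu - gv) \<le> e * (2 * L)"
    using assms norm_triangle_ineq4[of gu gv] by (intro mult_left_mono) auto
  finally show ?thesis by (simp add: algebra_simps)
qed

lemma norm_sub_scale_sq:
  fixes w h :: "'a::real_inner"
  shows "(norm (w - e *\<^sub>R h))^2 = (norm w)^2 - 2 * e * (h \<bullet> w) + e^2 * (norm h)^2"
  unfolding power2_norm_eq_inner
  by (simp add: inner_diff_left inner_diff_right inner_commute[of w h] algebra_simps power2_eq_square)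

lemma proj_step_good:
  fixes u v gu gv :: "'a::euclidean_space"
  assumes "convex X" "closed X" "X \<noteq> {}" "norm gu \<le> L" "norm gv \<le> L" "e \<ge> 0"
    and mono: "(gu - gv) \<bullet> (u - v) \<ge> 0"
  shows "(norm (proj_set X (u - e *\<^sub>R gu) - proj_set X (v - e *\<^sub>R gv)))^2 \<le> (norm (u - v))^2 + (2 * L * e)^2"
proof -
  have "norm (proj_set X (u - e *\<^sub>R gu) - proj_set X (v - e *\<^sub>R gv)) \<le> norm ((u - v) - e *\<^sub>R (gu - gv))"
    using closest_point_lipschitz[OF assms(1-3), of "u - e *\<^sub>R gu" "v - e *\<^sub>R gv"]
    unfolding proj_set_def dist_norm by (simp add: algebra_simps)
  then have "(norm (proj_set X (u - e *\<^sub>R gu) - proj_set X (v - e *\<^sub>R gv)))^2 \<le> (norm ((u - v) - e *\<^sub>R (gu - gv)))^2"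
    by (intro power_mono) auto
  also have "(norm ((u - v) - e *\<^sub>R (gu - gv)))^2 = (norm (u - v))^2 - 2 * e * ((gu - gv) \<bullet> (u - v)) + e^2 * (norm (gu - gv))^2"
    by (rule norm_sub_scale_sq)
  also have "\<dots> \<le> (norm (u - v))^2 + e^2 * (2 * L)^2"
  proof -
    have "0 \<le> 2 * e * ((gu - gv) \<bullet> (u - v))" using mono assms(6) by simp
    moreover have "norm (gu - gv) \<le> 2 * L" using assms norm_triangle_ineq4[of gu gv] by auto
    then have "(norm (gu - gv))^2 \<le> (2 * L)^2" by (intro power_mono) auto
    then have "e^2 * (norm (gu - gv))^2 \<le> e^2 * (2 * L)^2" by (intro mult_left_mono) auto
    ultimately show ?thesis by linarith
  qed
  finally show ?thesis by (simp add: power_mult_distrib algebra_simps)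
qed

theorem theorem3p4:
  fixes X :: "'a::euclidean_space set"
    and f :: "'a \<Rightarrow> 'z \<Rightarrow> real"
    and g :: "'a \<Rightarrow> 'z \<Rightarrow> 'a"
    and R L :: real and n K T :: nat
    and \<pi> :: "nat \<Rightarrow> nat" and \<eta> :: "nat \<Rightarrow> real" and x0 :: 'a
  assumes X_compact: "compact X" and X_convex: "convex X"
    and X_ball: "X \<subseteq> cball 0 R"
    and f_convex: "\<And>z. convex_on X (\<lambda>x. f x z)"
    and f_lip: "\<And>z. \<exists>U. open U \<and> X \<subseteq> U \<and> L-lipschitz_on U (\<lambda>x. f x z)"
    and g_subgrad: "\<And>x z y. x \<in> X \<Longrightarrow> y \<in> X \<Longrightarrow> f y z \<ge> f x z + g x z \<bullet> (y - x)"
    and g_bound: "\<And>x z. x \<in> X \<Longrightarrow> norm (g x z) \<le> L"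
    and n_pos: "n \<ge> 1"
    and perm: "\<pi> permutes {1..n}"
    and K_pos: "K \<ge> 1" and T_def: "T = n * K"
    and eta_pos: "\<And>t. t \<in> {1..T} \<Longrightarrow> \<eta> t > 0"
    and eta_mono: "\<And>s t. s \<in> {1..T} \<Longrightarrow> t \<in> {1..T} \<Longrightarrow> s \<le> t \<Longrightarrow> \<eta> t \<le> \<eta> s"
    and x0_in: "x0 \<in> X"
  shows "\<forall>S S'. neighboring n S S' \<longrightarrow>
           norm (persgd X g \<eta> n K \<pi> x0 S - persgd X g \<eta> n K \<pi> x0 S')
             \<le> min (2 * R)
                 (2 * L * (sqrt (\<Sum>t=1..T-1. (\<eta> t)\<^sup>2) + 2 / real n * (\<Sum>t=1..T-1. \<eta> t)))"
proof (intro allI impI)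
  fix S S' :: "nat \<Rightarrow> 'z"
  assume nb: "neighboring n S S'"
  have clX: "closed X" using X_compact by (rule compact_imp_closed)
  have neX: "X \<noteq> {}" using x0_in by auto
  have L0: "L \<ge> 0" using g_bound[OF x0_in] norm_ge_zero order_trans by blast
  define x where "x = persgd_seq X g \<eta> n \<pi> S x0"
  define y where "y = persgd_seq X g \<eta> n \<pi> S' x0"
  have inX: "persgd_seq X g \<eta> n \<pi> S0 x0 j \<in> X" for S0 :: "nat \<Rightarrow> 'z" and j
    by (cases j) (auto simp: Let_def proj_set_def x0_in intro!: closest_point_in_set[OF clX neX])
  have xS: "x (Suc j) = proj_set X (x j - \<eta> (Suc j) *\<^sub>R g (x j) (S (\<pi> (j mod n + 1))))" for j
    unfolding x_def by (simp add: Let_def)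
  have yS: "y (Suc j) = proj_set X (y j - \<eta> (Suc j) *\<^sub>R g (y j) (S' (\<pi> (j mod n + 1))))" for j
    unfolding y_def by (simp add: Let_def)
  have xX: "x j \<in> X" "y j \<in> X" for j unfolding x_def y_def by (rule inX)+
  obtain q where qn: "q < n" and qgood: "\<And>j. j mod n \<noteq> q \<Longrightarrow> S (\<pi> (j mod n + 1)) = S' (\<pi> (j mod n + 1))"
  proof -
    define D where "D = {i \<in> {1..n}. S i \<noteq> S' i}"
    have cD: "card D \<le> 1" using nb unfolding neighboring_def D_def .
    have fD: "finite D" unfolding D_def by simp
    have pin: "\<pi> (j mod n + 1) \<in> {1..n}" for j
    proof -
      have "j mod n < n" using n_pos by simp
      then have "j mod n + 1 \<in> {1..n}" by simp
      then show ?thesis using permutes_in_image[OF perm] by blast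
    qed
    show ?thesis
    proof (cases "D = {}")
      case True
      show ?thesis
      proof (rule that[of 0])
        show "0 < n" using n_pos by simp
        fix j show "S (\<pi> (j mod n + 1)) = S' (\<pi> (j mod n + 1))" using True pin[of j] unfolding D_def by auto
      qed
    next
      case False
      then obtain i where iD: "i \<in> D" by auto
      have "\<forall>a\<in>D. \<forall>b\<in>D. a = b" using cD card_le_Suc0_iff_eq[OF fD] by simp
      then have Di: "\<And>i'. i' \<in> D \<Longrightarrow> i' = i" using iD by blast
      define p where "p = inv \<pi> i"
      have i1n: "i \<in> {1..n}" using iD unfolding D_def by auto
      have pin2: "p \<in> {1..n}" unfolding p_def
        using permutes_in_image[OF permutes_inv[OF perm]] i1n by auto
      have pp: "\<pi> p = i" unfolding p_def using permutes_inverses(1)[OF perm] by simp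
      show ?thesis
      proof (rule that[of "p - 1"])
        show "p - 1 < n" using pin2 by auto
        fix j assume jq: "j mod n \<noteq> p - 1"
        show "S (\<pi> (j mod n + 1)) = S' (\<pi> (j mod n + 1))"
        proof (rule ccontr)
          assume "S (\<pi> (j mod n + 1)) \<noteq> S' (\<pi> (j mod n + 1))"
          then have "\<pi> (j mod n + 1) \<in> D" using pin[of j] unfolding D_def by auto
          then have "\<pi> (j mod n + 1) = \<pi> p" using Di pp by auto
          then have "j mod n + 1 = p" using permutes_inj[OF perm] by (simp add: inj_eq)
          then show False using jq by auto
        qed
      qed
    qed
  qed
  define N where "N = T - 1"
  define d where "d j = norm (x j - y j)" for j
  have eta_nn: "\<eta> (Suc j) \<ge> 0" if "j < N" for j
  proof -
    have "Suc j \<in> {1..T}" using that unfolding N_def by auto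
    then show ?thesis using eta_pos[of "Suc j"] by simp
  qed
  have key: "j \<le> N \<Longrightarrow> (j \<le> q \<longrightarrow> d j = 0) \<and>
      d j \<le> (2 * L) * sqrt (\<Sum>t=1..j. (\<eta> t)^2) + (2 * L) / n * (\<Sum>t=1..lidx n q j. \<eta> t)" for j
  proof (rule stab_abs[OF n_pos qn])
    show "0 \<le> 2 * L" using L0 by simp
    show "d 0 = 0" unfolding d_def x_def y_def by simp
    show "\<And>j. 0 \<le> d j" unfolding d_def by simp
    show "0 \<le> \<eta> t" if "1 \<le> t" "t \<le> N" for t
    proof -
      have "t \<in> {1..T}" using that unfolding N_def by auto
      then show ?thesis using eta_pos[of t] by linarith
    qed
    show "\<eta> t \<le> \<eta> s" if "1 \<le> s" "s \<le> t" "t \<le> N" for s t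
    proof -
      have "t \<in> {1..T}" "s \<in> {1..T}" using that unfolding N_def by auto
      then show ?thesis using eta_mono[of s t] that(2) by blast
    qed
    show "d (Suc j) = 0" if "j < N" "j mod n \<noteq> q" "d j = 0" for j
      using that qgood[OF that(2)] unfolding d_def xS yS by simp
    show "(d (Suc j))^2 \<le> (d j)^2 + (2 * L * \<eta> (Suc j))^2" if "j < N" "j mod n \<noteq> q" for j
    proof -
      have mono: "(g (x j) (S (\<pi> (j mod n + 1))) - g (y j) (S (\<pi> (j mod n + 1)))) \<bullet> (x j - y j) \<ge> 0"
      proof -
        let ?z = "S (\<pi> (j mod n + 1))"
        have "f (y j) ?z \<ge> f (x j) ?z + g (x j) ?z \<bullet> (y j - x j)" by (rule g_subgrad[OF xX])
        moreover have "f (x j) ?z \<ge> f (y j) ?z + g (y j) ?z \<bullet> (x j - y j)" by (rule g_subgrad[OF xX(2) xX(1)])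
        ultimately have "0 \<le> - (g (x j) ?z \<bullet> (y j - x j)) - g (y j) ?z \<bullet> (x j - y j)" by linarith
        also have "\<dots> = (g (x j) ?z - g (y j) ?z) \<bullet> (x j - y j)"
          by (simp add: inner_diff_left inner_diff_right algebra_simps)
        finally show ?thesis .
      qed
      show ?thesis unfolding d_def xS yS qgood[OF that(2), symmetric]
        by (rule proj_step_good[OF X_convex clX neX g_bound[OF xX(1)] g_bound[OF xX(2)] eta_nn[OF that(1)] mono])
    qed
    show "(d (Suc j))^2 \<le> (2 * L * \<eta> (Suc j))^2" if "j < N" "d j = 0" for j
    proof -
      have "d (Suc j) \<le> d j + 2 * L * \<eta> (Suc j)" unfolding d_def xS yS
        by (rule proj_step_bad[OF X_convex clX neX g_bound[OF xX(1)] g_bound[OF xX(2)] eta_nn[OF that(1)]])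
      then have "d (Suc j) \<le> 2 * L * \<eta> (Suc j)" using that by simp
      moreover have "0 \<le> d (Suc j)" unfolding d_def by simp
      ultimately show ?thesis by (intro power_mono) auto
    qed
    show "d (Suc j) \<le> d j + 2 * L * \<eta> (Suc j)" if "j < N" for j
      unfolding d_def xS yS
      by (rule proj_step_bad[OF X_convex clX neX g_bound[OF xX(1)] g_bound[OF xX(2)] eta_nn[OF that]])
  qed
  define B where "B = 2 * L * (sqrt (\<Sum>t=1..T-1. (\<eta> t)\<^sup>2) + 2 / real n * (\<Sum>t=1..T-1. \<eta> t))"
  have dB: "d j \<le> B" if "j \<le> N" for j
  proof -
    have h: "d j \<le> (2 * L) * sqrt (\<Sum>t=1..j. (\<eta> t)^2) + (2 * L) / n * (\<Sum>t=1..lidx n q j. \<eta> t)"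
      using key[OF that] by simp
    have s1: "(\<Sum>t=1..j. (\<eta> t)^2) \<le> (\<Sum>t=1..T-1. (\<eta> t)^2)"
      using that unfolding N_def by (intro sum_mono2) auto
    have "lidx n q j \<le> j" using lidx_le n_pos by simp
    have etnn: "0 \<le> \<eta> t" if "t \<in> {1..T-1}" for t
    proof -
      have "t \<in> {1..T}" using that by auto
      then show ?thesis using eta_pos[of t] by linarith
    qed
    have s2: "(\<Sum>t=1..lidx n q j. \<eta> t) \<le> (\<Sum>t=1..T-1. \<eta> t)"
    proof (rule sum_mono2)
      show "{1..lidx n q j} \<subseteq> {1..T-1}" using that \<open>lidx n q j \<le> j\<close> unfolding N_def by auto
    qed (auto intro: etnn)
    have s3: "0 \<le> (\<Sum>t=1..T-1. \<eta> t)" by (intro sum_nonneg etnn)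
    have "(2 * L) * sqrt (\<Sum>t=1..j. (\<eta> t)^2) \<le> (2 * L) * sqrt (\<Sum>t=1..T-1. (\<eta> t)^2)"
      using s1 L0 by (intro mult_left_mono) auto
    moreover have "(2 * L) / n * (\<Sum>t=1..lidx n q j. \<eta> t) \<le> (2 * L) / n * (\<Sum>t=1..T-1. \<eta> t)"
      using s2 L0 by (intro mult_left_mono) auto
    moreover have "(2 * L) / n * (\<Sum>t=1..T-1. \<eta> t) \<le> 2 * L * (2 / n * (\<Sum>t=1..T-1. \<eta> t))"
    proof -
      have "0 \<le> (2 * L) / n * (\<Sum>t=1..T-1. \<eta> t)" using s3 L0 by simp
      moreover have "2 * L * (2 / n * (\<Sum>t=1..T-1. \<eta> t)) = 2 * ((2 * L) / n * (\<Sum>t=1..T-1. \<eta> t))"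
        by simp
      ultimately show ?thesis by linarith
    qed
    moreover have "B = (2 * L) * sqrt (\<Sum>t=1..T-1. (\<eta> t)^2) + 2 * L * (2 / n * (\<Sum>t=1..T-1. \<eta> t))"
      unfolding B_def by (simp add: distrib_left)
    ultimately show ?thesis using h by linarith
  qed
  have wpos: "epoch_step \<eta> n k > 0" if "k \<in> {1..K}" for k
    unfolding epoch_step_def
  proof (rule sum_pos)
    show "finite {1..n}" by simp
    show "{1..n} \<noteq> {}" using n_pos by simp
    fix t assume t: "t \<in> {1..n}"
    have m1: "(k - 1) * n \<le> (K - 1) * n" using that by (intro mult_right_mono) auto
    have m2: "(K - 1) * n + n = T" using K_pos unfolding T_def
      by (cases K) (auto simp: algebra_simps)
    have "(k - 1) * n + t \<le> T" using m1 m2 t by (simp only: atLeastAtMost_iff) linarith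
    moreover have "1 \<le> (k - 1) * n + t" using t by auto
    ultimately show "0 < \<eta> ((k - 1) * n + t)" by (intro eta_pos) auto
  qed
  have idx: "(k - 1) * n \<le> N" if "k \<in> {1..K}" for k
  proof -
    have m1: "(k - 1) * n \<le> (K - 1) * n" using that by (intro mult_right_mono) auto
    have m2: "(K - 1) * n + n = T" using K_pos unfolding T_def
      by (cases K) (auto simp: algebra_simps)
    show ?thesis unfolding N_def using n_pos m1 m2 by linarith
  qed
  have eq: "persgd X g \<eta> n K \<pi> x0 S - persgd X g \<eta> n K \<pi> x0 S' =
      (1 / sum (epoch_step \<eta> n) {1..K}) *\<^sub>R (\<Sum>k\<in>{1..K}. epoch_step \<eta> n k *\<^sub>R x ((k - 1) * n))
    - (1 / sum (epoch_step \<eta> n) {1..K}) *\<^sub>R (\<Sum>k\<in>{1..K}. epoch_step \<eta> n k *\<^sub>R y ((k - 1) * n))"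
    unfolding persgd_def x_def y_def by simp
  have b1: "norm (persgd X g \<eta> n K \<pi> x0 S - persgd X g \<eta> n K \<pi> x0 S') \<le> 2 * R"
    unfolding eq
  proof (rule avg_bound)
    show "finite {1..K}" by simp
    show "{1..K} \<noteq> {}" using K_pos by simp
    show "\<And>k. k \<in> {1..K} \<Longrightarrow> 0 < epoch_step \<eta> n k" by (rule wpos)
    fix k
    have "x ((k - 1) * n) \<in> cball 0 R" "y ((k - 1) * n) \<in> cball 0 R" using xX X_ball by blast+
    then have "norm (x ((k - 1) * n)) \<le> R" "norm (y ((k - 1) * n)) \<le> R" by auto
    then show "norm (x ((k - 1) * n) - y ((k - 1) * n)) \<le> 2 * R"
      using norm_triangle_ineq4[of "x ((k - 1) * n)" "y ((k - 1) * n)"] by linarith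
  qed
  have b2: "norm (persgd X g \<eta> n K \<pi> x0 S - persgd X g \<eta> n K \<pi> x0 S') \<le> B"
    unfolding eq
  proof (rule avg_bound)
    show "finite {1..K}" by simp
    show "{1..K} \<noteq> {}" using K_pos by simp
    show "\<And>k. k \<in> {1..K} \<Longrightarrow> 0 < epoch_step \<eta> n k" by (rule wpos)
    fix k assume "k \<in> {1..K}"
    then show "norm (x ((k - 1) * n) - y ((k - 1) * n)) \<le> B"
      using dB[OF idx] unfolding d_def by blast
  qed
  show "norm (persgd X g \<eta> n K \<pi> x0 S - persgd X g \<eta> n K \<pi> x0 S') \<le> min (2 * R) (2 * L * (sqrt (\<Sum>t=1..T-1. (\<eta> t)\<^sup>2) + 2 / real n * (\<Sum>t=1..T-1. \<eta> t)))"
    using b1 b2 unfolding B_def by simp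
qed

end
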